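(* Let $\mathcal{X},\mathcal{S},\mathcal{A}$ be finite sets, let $Q(\cdot)\in\Delta(\mathcal{X})$ be an initial distribution and $Q(\cdot\mid x,a)\in\Delta(\mathcal{X})$ a transition kernel, and let $R^r:\mathcal{X}\times\mathcal{A}\to\mathbb{R}$ be the receiver's reward function. Consider the following process over periods $t=1,2,\dots$: $X_1\sim Q$; in period $t$ the sender, who observes $X_t$, sends a signal $S_t\in\mathcal{S}$; the receiver then takes an action $A_t\in\mathcal{A}$ and observes its reward $R^r_t=R^r(X_t,A_t)$; then $X_{t+1}\sim Q(\cdot\mid X_t,A_t)$. Suppose actions are generated by a common-agent policy of type $\theta$: at each $t$, a prescription $\gamma^s_t=\theta^s_t[\mu_t]$, which is a map $\mathcal{X}\to\Delta(\mathcal{S})$, is chosen as a function of the belief $\mu_t$ and the sender plays $S_t\sim\gamma^s_t(\cdot\mid X_t)$; and a prescription $\gamma^r_t=\theta^r_t[\nu_t]\in\Delta(\mathcal{A})$ is chosen as a function of the belief $\nu_t$ and the receiver plays $A_t\sim\gamma^r_t(\cdot)$. Here $\mu_1=Q$, and the beliefs are $$\nu_t(x)=P^{\theta}(X_t=x\mid s_{1:t},a_{1:t-1},r^r_{1:t-1}),\qquad \mu_{t+1}(x)=P^{\theta}(X_{t+1}=x\mid s_{1:t},a_{1:t},r^r_{1:t}).$$ Then there exist update functions $F$ and $G$, not depending on $\theta$, such that for every $t$ (along histories where the conditional probabilities are defined) $$\nu_t=F(\mu_t,\gamma^s_t,s_t),\qquad \mu_{t+1}=G(\nu_t,a_t,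r^r_t).$$
   Context: $\Delta(\mathcal{Y})$ denotes the set of probability distributions on a finite set $\mathcal{Y}$. $P^\theta$ denotes the probability measure on the process induced by the type-$\theta$ policy. The common information at the time the receiver acts in period $t$ is $(s_{1:t},a_{1:t-1},r^r_{1:t-1})$, and at the start of period $t+1$ it is $(s_{1:t},a_{1:t},r^r_{1:t})$; the sender additionally observes the state privately. *)

theory Defs
  imports "HOL-Probability.Probability"
begin

text \<open>
  A type-theta policy is a pair (thS, thR) with
    thS :: nat => 'x pmf => ('x => 's pmf),   thR :: nat => 'x pmf => 'a pmf
  (the period index t >= 1 and the current belief determine the prescription).
\<close>

type_synonym ('x, 's, 'a) traj = "('x \<times> 's \<times> 'a \<times> real) list"
type_synonym ('s, 'a) cinfo = "('s \<times> 'a \<times> real) list"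

definition comm :: "('x, 's, 'a) traj \<Rightarrow> ('s, 'a) cinfo" where
  "comm \<tau> = map (\<lambda>(x, s, a, r). (s, a, r)) \<tau>"

text \<open>Belief mu from the joint law of (trajectory of first t periods, X_{t+1}):
  conditional law of X_{t+1} given the common information h.\<close>
definition mu_of :: "(('x, 's, 'a) traj \<times> 'x) pmf \<Rightarrow> ('s, 'a) cinfo \<Rightarrow> 'x pmf" where
  "mu_of L h = map_pmf snd (cond_pmf L {(\<tau>, x). comm \<tau> = h})"

text \<open>Joint law of (trajectory of first t-1 periods, X_t, S_t) in period t,
  given the joint law L of (first t-1 periods, X_t).\<close>
definition M_of :: "(nat \<Rightarrow> 'x pmf \<Rightarrow> ('x \<Rightarrow> 's pmf)) \<Rightarrow> nat
    \<Rightarrow> (('x, 's, 'a) traj \<times> 'x) pmf \<Rightarrow> (('x, 's, 'a) traj \<times> 'x \<times> 's) pmf" where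
  "M_of thS t L = bind_pmf L (\<lambda>(\<tau>, x).
      map_pmf (\<lambda>s. (\<tau>, x, s)) (thS t (mu_of L (comm \<tau>)) x))"

definition nu_of :: "(('x, 's, 'a) traj \<times> 'x \<times> 's) pmf \<Rightarrow> ('s, 'a) cinfo \<Rightarrow> 's \<Rightarrow> 'x pmf" where
  "nu_of M h s = map_pmf (\<lambda>(\<tau>, x, s'). x)
      (cond_pmf M {(\<tau>, x, s'). comm \<tau> = h \<and> s' = s})"

text \<open>law Q K Rr thS thR t : joint law (P^theta) of (first t periods, X_{t+1}).\<close>
primrec law :: "'x pmf \<Rightarrow> ('x \<Rightarrow> 'a \<Rightarrow> 'x pmf) \<Rightarrow> ('x \<Rightarrow> 'a \<Rightarrow> real)
    \<Rightarrow> (nat \<Rightarrow> 'x pmf \<Rightarrow> ('x \<Rightarrow> 's pmf)) \<Rightarrow> (nat \<Rightarrow> 'x pmf \<Rightarrow> 'a pmf)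
    \<Rightarrow> nat \<Rightarrow> (('x, 's, 'a) traj \<times> 'x) pmf" where
  "law Q K Rr thS thR 0 = map_pmf (\<lambda>x. ([], x)) Q"
| "law Q K Rr thS thR (Suc t) =
     (let M = M_of thS (Suc t) (law Q K Rr thS thR t) in
      bind_pmf M (\<lambda>(\<tau>, x, s).
        bind_pmf (thR (Suc t) (nu_of M (comm \<tau>) s)) (\<lambda>a.
          map_pmf (\<lambda>x'. (\<tau> @ [(x, s, a, Rr x a)], x')) (K x a))))"

end

theory Submission
  imports Defs
begin


lemma measure_cond_pmf':
  assumes "set_pmf P \<inter> B \<noteq> {}"
  shows "measure (cond_pmf P B) X = measure P (B \<inter> X) / measure P B"
proof -
  have "emeasure (measure_pmf P) B \<noteq> 0"
    using assms by (simp add: measure_pmf.emeasure_eq_measure measure_pmf_zero_iff)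
  then show ?thesis
    unfolding cond_pmf.rep_eq[OF assms]
    by (subst measure_uniform_measure) (auto simp: measure_pmf.emeasure_eq_measure)
qed

lemma pmf_map_cond:
  assumes "set_pmf P \<inter> B \<noteq> {}"
  shows "pmf (map_pmf f (cond_pmf P B)) x = measure P (B \<inter> f -` {x}) / measure P B"
  by (simp add: pmf_map measure_cond_pmf'[OF assms])

lemma key_eq:
  fixes p :: "'x::finite pmf" and P :: "'b pmf" and f :: "'b \<Rightarrow> 'x"
  assumes h: "\<And>x. pmf p x = k * measure P (B \<inter> f -` {x})"
  shows "p = map_pmf f (cond_pmf P B)"
proof -
  have ne: "set_pmf P \<inter> B \<noteq> {}"
  proof
    assume e: "set_pmf P \<inter> B = {}"
    have "\<And>x. measure P (B \<inter> f -` {x}) = 0"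
      using e by (subst measure_pmf_zero_iff) blast
    then have "\<And>x. pmf p x = 0" using h by simp
    then have "sum (pmf p) UNIV = 0" by simp
    moreover have "sum (pmf p) UNIV = 1" by (rule sum_pmf_eq_1) auto
    ultimately show False by simp
  qed
  define q where "q = map_pmf f (cond_pmf P B)"
  have q: "\<And>x. pmf q x = measure P (B \<inter> f -` {x}) / measure P B"
    unfolding q_def by (rule pmf_map_cond[OF ne])
  have D: "measure P B \<noteq> 0" using ne by (simp add: measure_pmf_zero_iff)
  have pq: "\<And>x. pmf p x = (k * measure P B) * pmf q x"
    using h q D by simp
  have "1 = sum (pmf p) UNIV" by (rule sum_pmf_eq_1[symmetric]) auto
  also have "\<dots> = (k * measure P B) * sum (pmf q) UNIV"
    by (simp add: pq sum_distrib_left)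
  also have "sum (pmf q) UNIV = 1" by (rule sum_pmf_eq_1) auto
  finally have "k * measure P B = 1" by simp
  then have "\<And>x. pmf p x = pmf q x" using pq by simp
  then show ?thesis unfolding q_def[symmetric] by (rule pmf_eqI)
qed

lemma nn_split_finite:
  fixes f :: "'b \<Rightarrow> 'x::finite" and \<phi> :: "'x \<Rightarrow> ennreal"
  shows "(\<integral>\<^sup>+z. indicator B z * \<phi> (f z) \<partial>measure_pmf P) = (\<Sum>y\<in>UNIV. \<phi> y * emeasure P (B \<inter> f -` {y}))"
proof -
  have "\<And>z. indicator B z * \<phi> (f z) = (\<Sum>y\<in>UNIV. \<phi> y * indicator (B \<inter> f -` {y}) z)"
  proof -
    fix z
    have "(\<Sum>y\<in>UNIV. \<phi> y * indicator (B \<inter> f -` {y}) z) = (\<Sum>y\<in>{f z}. \<phi> y * indicator (B \<inter> f -` {y}) z)"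
      by (rule sum.mono_neutral_right) (auto simp: indicator_def)
    then show "indicator B z * \<phi> (f z) = (\<Sum>y\<in>UNIV. \<phi> y * indicator (B \<inter> f -` {y}) z)"
      by (simp add: indicator_def mult.commute)
  qed
  then have "(\<integral>\<^sup>+z. indicator B z * \<phi> (f z) \<partial>measure_pmf P) = (\<integral>\<^sup>+z. (\<Sum>y\<in>UNIV. \<phi> y * indicator (B \<inter> f -` {y}) z) \<partial>measure_pmf P)"
    by simp
  also have "\<dots> = (\<Sum>y\<in>UNIV. \<integral>\<^sup>+z. \<phi> y * indicator (B \<inter> f -` {y}) z \<partial>measure_pmf P)"
    by (rule nn_integral_sum) auto
  also have "\<dots> = (\<Sum>y\<in>UNIV. \<phi> y * emeasure P (B \<inter> f -` {y}))"
    by (simp add: nn_integral_cmult_indicator)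
  finally show ?thesis .
qed

lemma part1:
  fixes L :: "(('x::finite, 's::finite, 'a) traj \<times> 'x) pmf"
    and thS :: "nat \<Rightarrow> 'x pmf \<Rightarrow> ('x \<Rightarrow> 's pmf)"
  assumes pos: "measure (M_of thS t L) {(\<tau>, x, s'). comm \<tau> = h \<and> s' = s} > 0"
  shows "nu_of (M_of thS t L) h s = map_pmf fst (cond_pmf (bind_pmf (mu_of L h)
            (\<lambda>y. map_pmf (\<lambda>s'. (y, s')) (thS t (mu_of L h) y))) {z. snd z = s})"
proof -
  define M where "M = M_of thS t L"
  define B where "B = {(\<tau>::('x, 's, 'a) traj, x::'x, s'). comm \<tau> = h \<and> s' = s}"
  define E where "E = {(\<tau>::('x, 's, 'a) traj, x::'x). comm \<tau> = h}"
  define mu where "mu = mu_of L h"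
  define \<gamma> where "\<gamma> = thS t mu"
  define fM where "fM = (\<lambda>(\<tau>::('x, 's, 'a) traj, x::'x, s'::'s). x)"
  define J where "J = bind_pmf mu (\<lambda>y. map_pmf (\<lambda>s'. (y, s')) (\<gamma> y))"
  define Bj where "Bj = {z::'x \<times> 's. snd z = s}"
  have posB: "measure M B > 0" using pos by (simp add: M_def B_def)
  have A: "measure M (B \<inter> fM -` {x}) = measure L (E \<inter> snd -` {x}) * pmf (\<gamma> x) s" for x
  proof -
    have "emeasure M (B \<inter> fM -` {x}) =
       (\<integral>\<^sup>+z. ennreal (pmf (\<gamma> x) s) * indicator (E \<inter> snd -` {x}) z \<partial>measure_pmf L)"
      unfolding M_def M_of_def emeasure_bind_pmf
    proof (rule nn_integral_cong)
      fix z :: "('x, 's, 'a) traj \<times> 'x"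
      obtain \<tau> y where z: "z = (\<tau>, y)" by (cases z)
      show "emeasure (case z of (\<tau>, x) \<Rightarrow> map_pmf (\<lambda>s. (\<tau>, x, s)) (thS t (mu_of L (comm \<tau>)) x)) (B \<inter> fM -` {x})
            = ennreal (pmf (\<gamma> x) s) * indicator (E \<inter> snd -` {x}) z"
      proof (cases "comm \<tau> = h \<and> y = x")
        case True
        then have "(\<lambda>s'. (\<tau>, y, s')) -` (B \<inter> fM -` {x}) = {s}"
          by (auto simp: B_def fM_def)
        then show ?thesis using True z
          by (simp add: emeasure_pmf_single \<gamma>_def mu_def E_def)
      next
        case False
        then have "(\<lambda>s'. (\<tau>, y, s')) -` (B \<inter> fM -` {x}) = {}"
          by (auto simp: B_def fM_def)
        then show ?thesis using False z
          by (auto simp: E_def)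
      qed
    qed
    also have "\<dots> = ennreal (pmf (\<gamma> x) s) * emeasure L (E \<inter> snd -` {x})"
      by (rule nn_integral_cmult_indicator) simp
    finally show ?thesis
      by (simp add: measure_pmf.emeasure_eq_measure ennreal_mult''[symmetric] mult.commute)
  qed
  obtain z where z: "z \<in> set_pmf M" "z \<in> B"
    using posB measure_pmf_zero_iff[of M B] by auto
  obtain \<tau> x0 s0 where zz: "z = (\<tau>, x0, s0)" by (cases z) auto
  have "measure M (B \<inter> fM -` {x0}) > 0"
    by (rule measure_pmf_posI[OF z(1)]) (use z zz in \<open>auto simp: fM_def\<close>)
  then have "measure L (E \<inter> snd -` {x0}) > 0"
  proof (rule contrapos_pp)
    assume "\<not> measure L (E \<inter> snd -` {x0}) > 0"
    then have "measure L (E \<inter> snd -` {x0}) = 0" using measure_nonneg[of L "E \<inter> snd -` {x0}"] by linarith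
    then show "\<not> measure M (B \<inter> fM -` {x0}) > 0" using A[of x0] by simp
  qed
  then have neE: "set_pmf L \<inter> E \<noteq> {}"
    using measure_pmf_zero_iff[of L "E \<inter> snd -` {x0}"] by auto
  have LE: "measure L E \<noteq> 0" using neE by (simp add: measure_pmf_zero_iff)
  have mux: "pmf mu x = measure L (E \<inter> snd -` {x}) / measure L E" for x
    unfolding mu_def mu_of_def E_def[symmetric] by (rule pmf_map_cond[OF neE])
  have Jx: "measure J (Bj \<inter> fst -` {x}) = pmf mu x * pmf (\<gamma> x) s" for x
  proof -
    have "emeasure J (Bj \<inter> fst -` {x}) =
       (\<integral>\<^sup>+y. ennreal (pmf (\<gamma> x) s) * indicator {x} y \<partial>measure_pmf mu)"
      unfolding J_def emeasure_bind_pmf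
    proof (rule nn_integral_cong)
      fix y
      show "emeasure (map_pmf (\<lambda>s'. (y, s')) (\<gamma> y)) (Bj \<inter> fst -` {x}) =
          ennreal (pmf (\<gamma> x) s) * indicator {x} y"
      proof (cases "y = x")
        case True
        then have "(\<lambda>s'. (y, s')) -` (Bj \<inter> fst -` {x}) = {s}" by (auto simp: Bj_def)
        then show ?thesis using True by (simp add: emeasure_pmf_single)
      next
        case False
        then have "(\<lambda>s'. (y, s')) -` (Bj \<inter> fst -` {x}) = {}" by (auto simp: Bj_def)
        then show ?thesis using False by simp
      qed
    qed
    also have "\<dots> = ennreal (pmf (\<gamma> x) s) * emeasure mu {x}"
      by (rule nn_integral_cmult_indicator) simp
    finally show ?thesis
      by (simp add: measure_pmf.emeasure_eq_measure ennreal_mult''[symmetric] mult.commute emeasure_pmf_single measure_pmf_single)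
  qed
  have "map_pmf fM (cond_pmf M B) = map_pmf fst (cond_pmf J Bj)"
  proof (rule key_eq)
    fix x
    have neM: "set_pmf M \<inter> B \<noteq> {}" using z by auto
    show "pmf (map_pmf fM (cond_pmf M B)) x = (measure L E / measure M B) * measure J (Bj \<inter> fst -` {x})"
      unfolding pmf_map_cond[OF neM] A Jx mux using LE by simp
  qed
  then show ?thesis
    unfolding nu_of_def M_def[symmetric] J_def Bj_def \<gamma>_def mu_def B_def fM_def by simp
qed

lemma part2:
  fixes M :: "(('x::finite, 's, 'a) traj \<times> 'x \<times> 's) pmf"
    and thR' :: "'x pmf \<Rightarrow> 'a pmf"
    and K :: "'x \<Rightarrow> 'a \<Rightarrow> 'x pmf" and Rr :: "'x \<Rightarrow> 'a \<Rightarrow> real"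
  defines "LL \<equiv> bind_pmf M (\<lambda>(\<tau>, x, s). bind_pmf (thR' (nu_of M (comm \<tau>) s))
              (\<lambda>a. map_pmf (\<lambda>x'. (\<tau> @ [(x, s, a, Rr x a)], x')) (K x a)))"
  assumes pos: "measure LL {(\<tau>, x). comm \<tau> = h @ [(s, a, r)]} > 0"
  shows "mu_of LL (h @ [(s, a, r)]) = map_pmf snd (cond_pmf (bind_pmf (nu_of M h s)
            (\<lambda>y. map_pmf (\<lambda>x'. (y, x')) (K y a))) {z. Rr (fst z) a = r})"
proof -
  define B where "B = {(\<tau>::('x, 's, 'a) traj, x::'x, s'). comm \<tau> = h \<and> s' = s}"
  define E2 where "E2 = {(\<tau>::('x, 's, 'a) traj, x::'x). comm \<tau> = h @ [(s, a, r)]}"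
  define fM where "fM = (\<lambda>(\<tau>::('x, 's, 'a) traj, x::'x, s'::'s). x)"
  define nu where "nu = nu_of M h s"
  define \<rho> where "\<rho> = thR' nu"
  define J where "J = bind_pmf nu (\<lambda>y. map_pmf (\<lambda>x'. (y, x')) (K y a))"
  define C where "C = {z::'x \<times> 'x. Rr (fst z) a = r}"
  define \<phi> where "\<phi> = (\<lambda>Y y. ennreal (pmf \<rho> a) * (indicator {y. Rr y a = r} y * emeasure (K y a) Y))"
  have nu_eq: "nu = map_pmf fM (cond_pmf M B)"
    by (simp add: nu_def nu_of_def fM_def B_def)
  have kk: "emeasure LL (E2 \<inter> snd -` Y) = (\<integral>\<^sup>+z. indicator B z * \<phi> Y (fM z) \<partial>measure_pmf M)" for Y
    unfolding LL_def emeasure_bind_pmf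
  proof (rule nn_integral_cong)
    fix z :: "('x, 's, 'a) traj \<times> 'x \<times> 's"
    obtain \<tau> x s0 where z: "z = (\<tau>, x, s0)" by (cases z) auto
    have "emeasure (bind_pmf (thR' (nu_of M (comm \<tau>) s0))
              (\<lambda>a. map_pmf (\<lambda>x'. (\<tau> @ [(x, s0, a, Rr x a)], x')) (K x a))) (E2 \<inter> snd -` Y)
       = indicator B z * \<phi> Y (fM z)"
    proof (cases "comm \<tau> = h \<and> s0 = s")
      case True
      have rr: "thR' (nu_of M (comm \<tau>) s0) = \<rho>" using True by (simp add: \<rho>_def nu_def)
      have "emeasure (bind_pmf (thR' (nu_of M (comm \<tau>) s0))
              (\<lambda>a. map_pmf (\<lambda>x'. (\<tau> @ [(x, s0, a, Rr x a)], x')) (K x a))) (E2 \<inter> snd -` Y)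
          = (\<integral>\<^sup>+a'. (indicator {y. Rr y a = r} x * emeasure (K x a) Y) * indicator {a} a' \<partial>measure_pmf \<rho>)"
        unfolding emeasure_bind_pmf rr
      proof (rule nn_integral_cong)
        fix a'
        show "emeasure (map_pmf (\<lambda>x'. (\<tau> @ [(x, s0, a', Rr x a')], x')) (K x a')) (E2 \<inter> snd -` Y)
           = (indicator {y. Rr y a = r} x * emeasure (K x a) Y) * indicator {a} a'"
        proof (cases "a' = a \<and> Rr x a = r")
          case True2: True
          then have "(\<lambda>x'. (\<tau> @ [(x, s0, a', Rr x a')], x')) -` (E2 \<inter> snd -` Y) = Y"
            using True by (auto simp: E2_def comm_def)
          then show ?thesis using True2 by simp
        next
          case False2: False
          then have "(\<lambda>x'. (\<tau> @ [(x, s0, a', Rr x a')], x')) -` (E2 \<inter> snd -` Y) = {}"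
            using True by (auto simp: E2_def comm_def)
          then show ?thesis using False2 by (auto simp: indicator_def)
        qed
      qed
      also have "\<dots> = (indicator {y. Rr y a = r} x * emeasure (K x a) Y) * emeasure \<rho> {a}"
        by (rule nn_integral_cmult_indicator) simp
      finally show ?thesis using True z
        by (simp add: B_def fM_def \<phi>_def emeasure_pmf_single mult.commute mult.left_commute)
    next
      case False
      then have "\<And>a'. (\<lambda>x'. (\<tau> @ [(x, s0, a', Rr x a')], x')) -` (E2 \<inter> snd -` Y) = {}"
        by (auto simp: E2_def comm_def)
      then show ?thesis using False z by (simp add: B_def)
    qed
    then show "emeasure (case z of (\<tau>, x, s) \<Rightarrow> bind_pmf (thR' (nu_of M (comm \<tau>) s))
              (\<lambda>a. map_pmf (\<lambda>x'. (\<tau> @ [(x, s, a, Rr x a)], x')) (K x a))) (E2 \<inter> snd -` Y)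
       = indicator B z * \<phi> Y (fM z)" using z by simp
  qed
  have neM: "set_pmf M \<inter> B \<noteq> {}"
  proof
    assume e: "set_pmf M \<inter> B = {}"
    have "emeasure LL (E2 \<inter> snd -` UNIV) = (\<integral>\<^sup>+z. 0 \<partial>measure_pmf M)"
      unfolding kk by (rule nn_integral_cong_AE) (use e in \<open>auto simp: AE_measure_pmf_iff indicator_def\<close>)
    then have "measure LL E2 = 0" by (simp add: measure_pmf.emeasure_eq_measure)
    then show False using pos by (simp add: E2_def)
  qed
  have MB: "measure M B \<noteq> 0" using neM by (simp add: measure_pmf_zero_iff)
  have Mx: "measure M (B \<inter> fM -` {y}) = pmf nu y * measure M B" for y
    unfolding nu_eq pmf_map_cond[OF neM] using MB by simp
  have num: "emeasure LL (E2 \<inter> snd -` {x'}) = (\<Sum>y\<in>UNIV. \<phi> {x'} y * ennreal (pmf nu y * measure M B))" for x'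
    unfolding kk nn_split_finite by (simp add: measure_pmf.emeasure_eq_measure Mx)
  have Jx: "emeasure J (C \<inter> snd -` {x'}) = (\<Sum>y\<in>UNIV. (indicator {y. Rr y a = r} y * emeasure (K y a) {x'}) * ennreal (pmf nu y))" for x'
  proof -
    have "emeasure J (C \<inter> snd -` {x'}) = (\<integral>\<^sup>+y. indicator UNIV y * (\<lambda>y. indicator {y. Rr y a = r} y * emeasure (K y a) {x'}) (id y) \<partial>measure_pmf nu)"
      unfolding J_def emeasure_bind_pmf
    proof (rule nn_integral_cong)
      fix y
      show "emeasure (map_pmf (\<lambda>x'. (y, x')) (K y a)) (C \<inter> snd -` {x'}) = indicator UNIV y * (\<lambda>y. indicator {y. Rr y a = r} y * emeasure (K y a) {x'}) (id y)"
      proof (cases "Rr y a = r")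
        case True
        then have "(\<lambda>x''. (y, x'')) -` (C \<inter> snd -` {x'}) = {x'}" by (auto simp: C_def)
        then show ?thesis using True by simp
      next
        case False
        then have "(\<lambda>x''. (y, x'')) -` (C \<inter> snd -` {x'}) = {}" by (auto simp: C_def)
        then show ?thesis using False by simp
      qed
    qed
    also have "\<dots> = (\<Sum>y\<in>UNIV. (indicator {y. Rr y a = r} y * emeasure (K y a) {x'}) * emeasure nu (UNIV \<inter> id -` {y}))"
      by (rule nn_split_finite)
    finally show ?thesis by (simp add: emeasure_pmf_single)
  qed
  have eqx: "measure LL (E2 \<inter> snd -` {x'}) = (pmf \<rho> a * measure M B) * measure J (C \<inter> snd -` {x'})" for x'
  proof -
    have "ennreal (measure LL (E2 \<inter> snd -` {x'})) = ennreal (pmf \<rho> a * measure M B) * ennreal (measure J (C \<inter> snd -` {x'}))"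
      unfolding measure_pmf.emeasure_eq_measure[symmetric] num Jx
      by (simp add: \<phi>_def sum_distrib_left ennreal_mult'' mult_ac)
    then show ?thesis
      by (simp add: ennreal_mult''[symmetric])
  qed
  have neLL: "set_pmf LL \<inter> E2 \<noteq> {}"
    using pos measure_pmf_zero_iff[of LL E2] unfolding E2_def by force
  have "map_pmf snd (cond_pmf LL E2) = map_pmf snd (cond_pmf J C)"
  proof (rule key_eq)
    fix x'
    show "pmf (map_pmf snd (cond_pmf LL E2)) x' = (pmf \<rho> a * measure M B / measure LL E2) * measure J (C \<inter> snd -` {x'})"
      unfolding pmf_map_cond[OF neLL] eqx by simp
  qed
  then show ?thesis
    unfolding mu_of_def E2_def[symmetric] J_def C_def nu_def .
qed

theorem lemma1:
  fixes Q :: "'x::finite pmf"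
    and K :: "'x \<Rightarrow> 'a::finite \<Rightarrow> 'x pmf"
    and Rr :: "'x \<Rightarrow> 'a \<Rightarrow> real"
  shows "\<exists>(F :: 'x pmf \<Rightarrow> ('x \<Rightarrow> 's::finite pmf) \<Rightarrow> 's \<Rightarrow> 'x pmf)
           (G :: 'x pmf \<Rightarrow> 'a \<Rightarrow> real \<Rightarrow> 'x pmf).
     \<forall>(thS :: nat \<Rightarrow> 'x pmf \<Rightarrow> ('x \<Rightarrow> 's pmf)) (thR :: nat \<Rightarrow> 'x pmf \<Rightarrow> 'a pmf).
     \<forall>t h s.
       (let L = law Q K Rr thS thR t;
            M = M_of thS (Suc t) L
        in (measure_pmf.prob M {(\<tau>, x, s'). comm \<tau> = h \<and> s' = s} > 0 \<longrightarrow>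
              nu_of M h s = F (mu_of L h) (thS (Suc t) (mu_of L h)) s)
         \<and> (\<forall>a r. measure_pmf.prob (law Q K Rr thS thR (Suc t))
                     {(\<tau>, x). comm \<tau> = h @ [(s, a, r)]} > 0 \<longrightarrow>
                   mu_of (law Q K Rr thS thR (Suc t)) (h @ [(s, a, r)])
                     = G (nu_of M h s) a r))"
proof -
  define F where "F = (\<lambda>(mu::'x pmf) (\<gamma>::'x \<Rightarrow> 's pmf) s. map_pmf fst (cond_pmf (bind_pmf mu
            (\<lambda>y. map_pmf (\<lambda>s'. (y, s')) (\<gamma> y))) {z. snd z = s}))"
  define G where "G = (\<lambda>(nu::'x pmf) (a::'a) r. map_pmf snd (cond_pmf (bind_pmf nu
            (\<lambda>y. map_pmf (\<lambda>x'. (y, x')) (K y a))) {z. Rr (fst z) a = r}))"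
  show ?thesis
  proof (intro exI allI)
    fix thS :: "nat \<Rightarrow> 'x pmf \<Rightarrow> ('x \<Rightarrow> 's pmf)" and thR :: "nat \<Rightarrow> 'x pmf \<Rightarrow> 'a pmf"
      and t h s
    define L where "L = law Q K Rr thS thR t"
    define M where "M = M_of thS (Suc t) L"
    have P1: "measure_pmf.prob M {(\<tau>, x, s'). comm \<tau> = h \<and> s' = s} > 0 \<longrightarrow>
              nu_of M h s = F (mu_of L h) (thS (Suc t) (mu_of L h)) s"
      using part1[where thS=thS and t="Suc t" and L=L and h=h and s=s] unfolding M_def F_def by simp
    have LL: "law Q K Rr thS thR (Suc t) = bind_pmf M (\<lambda>(\<tau>, x, s). bind_pmf (thR (Suc t) (nu_of M (comm \<tau>) s))
              (\<lambda>a. map_pmf (\<lambda>x'. (\<tau> @ [(x, s, a, Rr x a)], x')) (K x a)))"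
      by (simp add: M_def L_def Let_def)
    have P2: "\<forall>a r. measure_pmf.prob (law Q K Rr thS thR (Suc t))
                     {(\<tau>, x). comm \<tau> = h @ [(s, a, r)]} > 0 \<longrightarrow>
                   mu_of (law Q K Rr thS thR (Suc t)) (h @ [(s, a, r)])
                     = G (nu_of M h s) a r"
      unfolding LL G_def using part2[where M=M and thR'="thR (Suc t)" and K=K and Rr=Rr and h=h and s=s] by simp
    show "let L = law Q K Rr thS thR t;
            M = M_of thS (Suc t) L
        in (measure_pmf.prob M {(\<tau>, x, s'). comm \<tau> = h \<and> s' = s} > 0 \<longrightarrow>
              nu_of M h s = F (mu_of L h) (thS (Suc t) (mu_of L h)) s)
         \<and> (\<forall>a r. measure_pmf.prob (law Q K Rr thS thR (Suc t))
                     {(\<tau>, x). comm \<tau> = h @ [(s, a, r)]} > 0 \<longrightarrow>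
                   mu_of (law Q K Rr thS thR (Suc t)) (h @ [(s, a, r)])
                     = G (nu_of M h s) a r)"
      unfolding Let_def L_def[symmetric] M_def[symmetric] using P1 P2 by blast
  qed
qed

end
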